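(* Let $k\ge 4$, $n=2k-1$, and $\lambda\in\overline{\mathcal{U}}_{T_n}$. Then the Young diagram $\mathrm{KN}(S_\lambda)$ has exactly $3n-3$ cells; consequently the sum of the hook lengths of the cells on its main diagonal is $3n-3$.
   Context: A partition of $N$ into distinct parts is a sequence $\lambda=(\lambda_1<\dots<\lambda_t)$ of positive integers with sum $N$ and $t\ge 2$, identified with its set of parts. Missing parts: $\mathcal{M}_\lambda=\{1,\dots,\lambda_t\}\setminus\lambda$. $\lambda$ is refinable if two distinct missing parts sum to a part of $\lambda$, unrefinable otherwise; $\mathcal{U}_N$ is the set of unrefinable partitions of $N$. An element of $\mathcal{U}_N$ is maximal if its largest part is the maximum of the largest parts of elements of $\mathcal{U}_N$; $\widetilde{\mathcal{U}}_N$ is the set of these and $\overline{\mathcal{U}}_N=\{\lambda\in\widetilde{\mathcal{U}}_N:\#\mathcal{M}_\lambda=\lfloor\lambda_t/2\rfloor\}$. $T_n=n(n+1)/2$. $S_\lambda=\mathbb{N}_0\setminus\lambda$. The Keith–Nath transformation sends a set $S\subseteq\mathbb{N}_0$ with $0\in S$ and finite complement to the Young diagram $\mathrm{KN}(S)$ whose boundary is the lattice path that, starting at the origin, takes for $j=0,1,\dots,\max(\mathbb{N}_0\setminus S)$ an east step if $j\in S$ and a north step otherwise (the region between this path, the vertical axis and the horizontal line at the path's final height). Diagrams are in English convention; the hook length of a cell is (cells to its right in its row) + (cells below it in its column) + 1; the main diagonal consists of the cells in row $i$ and column $i$. *)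

theory Defs
  imports Main
begin

text \<open>Partitions into distinct parts are represented by their (finite) sets of parts.\<close>

definition distinct_partition :: "nat \<Rightarrow> nat set \<Rightarrow> bool" where
  "distinct_partition N lam \<longleftrightarrow>
     finite lam \<and> 0 \<notin> lam \<and> \<Sum>lam = N \<and> card lam \<ge> 2"

definition largest_part :: "nat set \<Rightarrow> nat" where
  "largest_part lam = Max lam"

definition missing_parts :: "nat set \<Rightarrow> nat set" where
  "missing_parts lam = {1..largest_part lam} - lam"

definition refinable :: "nat set \<Rightarrow> bool" where
  "refinable lam \<longleftrightarrow>
     (\<exists>a\<in>missing_parts lam. \<exists>b\<in>missing_parts lam. a \<noteq> b \<and> a + b \<in> lam)"

definition unrefinable_parts :: "nat \<Rightarrow> nat set set" where
  "unrefinable_parts N = {lam. distinct_partition N lam \<and> \<not> refinable lam}"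

definition max_largest_part :: "nat \<Rightarrow> nat" where
  "max_largest_part N = Max (largest_part ` unrefinable_parts N)"

definition maximal_unrefinable :: "nat \<Rightarrow> nat set set" where
  "maximal_unrefinable N =
     {lam \<in> unrefinable_parts N. largest_part lam = max_largest_part N}"

definition maximal_unrefinable_bar :: "nat \<Rightarrow> nat set set" where
  "maximal_unrefinable_bar N =
     {lam \<in> maximal_unrefinable N. card (missing_parts lam) = largest_part lam div 2}"

definition triangular :: "nat \<Rightarrow> nat" where
  "triangular n = n * (n + 1) div 2"

definition S_of :: "nat set \<Rightarrow> nat set" where
  "S_of lam = UNIV - lam"

text \<open>A Young diagram is a set of cells (i, j), i = row
  (1 = top, English convention), j = column (1 = leftmost). The boundary path takes for
  j = 0, ..., max gap an east step if j is in S and a north step otherwise. The region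
  to the left of the path, below the final height, has, at the height of the r-th north
  step (gap g_r, gaps increasing), a row of length #{s in S. s < g_r}. In English
  convention the top row corresponds to the last north step, i.e. to the largest gap.
  So row i corresponds to the i-th largest gap.\<close>

definition gaps_desc :: "nat set \<Rightarrow> nat list" where
  "gaps_desc S = rev (sorted_list_of_set (UNIV - S))"

definition KN :: "nat set \<Rightarrow> (nat \<times> nat) set" where
  "KN S = {(i, j). 1 \<le> i \<and> i \<le> length (gaps_desc S) \<and> 1 \<le> j \<and>
                   j \<le> card {s \<in> S. s < gaps_desc S ! (i - 1)}}"

definition hook_length :: "(nat \<times> nat) set \<Rightarrow> nat \<times> nat \<Rightarrow> nat" where
  "hook_length D c =
     card {j'. j' > snd c \<and> (fst c, j') \<in> D} + card {i'. i' > fst c \<and> (i', snd c) \<in> D} + 1"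

definition main_diagonal :: "(nat \<times> nat) set \<Rightarrow> (nat \<times> nat) set" where
  "main_diagonal D = {c \<in> D. fst c = snd c}"

end

theory Submission
  imports Defs
begin

lemma pairs_less_sum:
  fixes A :: "nat set"
  assumes "finite A"
  shows "2 * (\<Sum>g\<in>A. card {p\<in>A. p < g}) = card A * (card A - 1)"
  using assms
proof (induction "card A" arbitrary: A)
  case 0
  then show ?case by simp
next
  case (Suc c)
  then have ne: "A \<noteq> {}" by auto
  define m where "m = Max A"
  have mA: "m \<in> A" using Suc.prems ne m_def by simp
  have le: "\<And>x. x \<in> A \<Longrightarrow> x \<le> m" using Suc.prems m_def by simp
  define A' where "A' = A - {m}"
  have cA': "card A' = c" using Suc.hyps(2) mA A'_def Suc.prems by simp
  have fA': "finite A'" using Suc.prems A'_def by simp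
  have IH: "2 * (\<Sum>g\<in>A'. card {p\<in>A'. p < g}) = card A' * (card A' - 1)"
    using Suc.hyps(1)[OF cA'[symmetric] fA'] .
  have Aeq: "A = insert m A'" using mA A'_def by auto
  have "(\<Sum>g\<in>A. card {p\<in>A. p < g}) = card {p\<in>A. p < m} + (\<Sum>g\<in>A'. card {p\<in>A. p < g})"
    using mA Suc.prems A'_def by (simp add: sum.remove)
  also have "card {p\<in>A. p < m} = c"
  proof -
    have "{p\<in>A. p < m} = A'" using le A'_def by force
    then show ?thesis using cA' by simp
  qed
  also have "(\<Sum>g\<in>A'. card {p\<in>A. p < g}) = (\<Sum>g\<in>A'. card {p\<in>A'. p < g})"
  proof (rule sum.cong[OF refl])
    fix g assume "g \<in> A'"
    then have "g < m" using le A'_def by force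
    then have "{p\<in>A. p < g} = {p\<in>A'. p < g}" using A'_def by auto
    then show "card {p\<in>A. p < g} = card {p\<in>A'. p < g}" by simp
  qed
  finally have "2 * (\<Sum>g\<in>A. card {p\<in>A. p < g}) = 2 * c + c * (c - 1)"
    using IH cA' by simp
  also have "\<dots> = Suc c * (Suc c - 1)" by (cases c) (auto simp: algebra_simps)
  finally show ?case using Suc.hyps(2) by simp
qed

lemma KN_facts:
  fixes lam :: "nat set"
  assumes fin: "finite lam"
  defines "D \<equiv> KN (S_of lam)"
  shows "finite D" "\<And>i j. (i,j) \<in> D \<Longrightarrow> (min i j, min i j) \<in> D"
    "card D = (\<Sum>g\<in>lam. card {s. s \<notin> lam \<and> s < g})"
proof -
  define sl where "sl = sorted_list_of_set lam"
  define gd where "gd = rev sl"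
  define t where "t = card lam"
  have S: "UNIV - S_of lam = lam" unfolding S_of_def by auto
  have gd: "gaps_desc (S_of lam) = gd" unfolding gaps_desc_def gd_def sl_def S ..
  have lsl: "length sl = t" unfolding sl_def t_def by simp
  have lgd: "length gd = t" unfolding gd_def using lsl by simp
  have ssl: "sorted sl" "distinct sl" "set sl = lam" unfolding sl_def using fin by auto
  define R where "R i = card {s \<in> S_of lam. s < gd ! (i - 1)}" for i
  have Ddef: "D = {(i, j). 1 \<le> i \<and> i \<le> t \<and> 1 \<le> j \<and> j \<le> R i}"
    unfolding D_def KN_def gd lgd R_def ..
  have mono: "R i \<le> R i'" if "1 \<le> i'" "i' \<le> i" "i \<le> t" for i i'
  proof -
    have "gd ! (i - 1) = sl ! (t - i)" unfolding gd_def using that lsl by (simp add: rev_nth)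
    moreover have "gd ! (i' - 1) = sl ! (t - i')" unfolding gd_def using that lsl by (simp add: rev_nth)
    moreover have "sl ! (t - i) \<le> sl ! (t - i')"
      using ssl(1) that lsl by (intro sorted_nth_mono) auto
    ultimately have "gd ! (i - 1) \<le> gd ! (i' - 1)" by simp
    then have "{s \<in> S_of lam. s < gd ! (i - 1)} \<subseteq> {s \<in> S_of lam. s < gd ! (i' - 1)}" by auto
    moreover have "finite {s \<in> S_of lam. s < gd ! (i' - 1)}" by simp
    ultimately show ?thesis unfolding R_def by (rule card_mono[rotated])
  qed
  have DS: "D = Sigma {1..t} (\<lambda>i. {1..R i})" unfolding Ddef by auto
  show "finite D" unfolding DS by simp
  show "(min i j, min i j) \<in> D" if "(i,j) \<in> D" for i j
  proof (cases "i \<le> j")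
    case True then show ?thesis using that unfolding Ddef by auto
  next
    case False
    then have "R i \<le> R j" using that unfolding Ddef by (intro mono) auto
    then show ?thesis using that False unfolding Ddef by auto
  qed
  have "card D = (\<Sum>i\<in>{1..t}. R i)" unfolding DS by simp
  also have "\<dots> = (\<Sum>i<t. R (Suc i))"
    by (rule sum.reindex_bij_witness[where i="\<lambda>i. i + 1" and j="\<lambda>i. i - 1"]) auto
  also have "\<dots> = (\<Sum>i<t. card {s. s \<notin> lam \<and> s < gd ! i})"
    unfolding R_def S_of_def by simp
  also have "\<dots> = sum_list (map (\<lambda>g. card {s. s \<notin> lam \<and> s < g}) gd)"
    using lgd by (simp add: sum_list_sum_nth atLeast0LessThan)
  also have "\<dots> = sum_list (map (\<lambda>g. card {s. s \<notin> lam \<and> s < g}) sl)"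
    unfolding gd_def by (simp add: rev_map[symmetric])
  also have "\<dots> = (\<Sum>g\<in>lam. card {s. s \<notin> lam \<and> s < g})"
    using sum.distinct_set_conv_list[OF ssl(2), of "\<lambda>g. card {s. s \<notin> lam \<and> s < g}"] ssl(3) by simp
  finally show "card D = (\<Sum>g\<in>lam. card {s. s \<notin> lam \<and> s < g})" .
qed

lemma young_hook_sum:
  assumes fin: "finite D"
    and cl: "\<And>i j. (i,j) \<in> D \<Longrightarrow> (min i j, min i j) \<in> D"
  shows "(\<Sum>c\<in>main_diagonal D. hook_length D c) = card D"
proof -
  let ?phi = "\<lambda>x::nat\<times>nat. (min (fst x) (snd x), min (fst x) (snd x))"
  have fdiag: "finite (main_diagonal D)" using fin unfolding main_diagonal_def by auto
  have img: "?phi ` D \<subseteq> main_diagonal D"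
    using cl unfolding main_diagonal_def by auto
  have "card D = (\<Sum>x\<in>D. 1::nat)" by simp
  also have "\<dots> = (\<Sum>c\<in>main_diagonal D. \<Sum>x\<in>{x. x \<in> D \<and> ?phi x = c}. 1)"
    using sum.group[OF fin fdiag img, of "\<lambda>_. 1::nat"] by simp
  also have "\<dots> = (\<Sum>c\<in>main_diagonal D. hook_length D c)"
  proof (rule sum.cong[OF refl])
    fix c assume c: "c \<in> main_diagonal D"
    then obtain m where cm: "c = (m,m)" and mD: "(m,m) \<in> D" unfolding main_diagonal_def
      by (cases c) auto
    define A where "A = {j'. j' > m \<and> (m, j') \<in> D}"
    define B where "B = {i'. i' > m \<and> (i', m) \<in> D}"
    have fA: "finite A"
    proof -
      have "A \<subseteq> snd ` D" unfolding A_def by force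
      then show ?thesis using fin finite_subset by blast
    qed
    have fB: "finite B"
    proof -
      have "B \<subseteq> fst ` D" unfolding B_def by force
      then show ?thesis using fin finite_subset by blast
    qed
    have eq: "{x. x \<in> D \<and> ?phi x = c} = insert (m,m) (Pair m ` A \<union> (\<lambda>i. (i,m)) ` B)"
      unfolding A_def B_def cm using mD by (auto simp: min_def split: if_splits)
    have "card (insert (m,m) (Pair m ` A \<union> (\<lambda>i. (i,m)) ` B)) = 1 + card A + card B"
    proof -
      have d1: "(m,m) \<notin> Pair m ` A \<union> (\<lambda>i. (i,m)) ` B" unfolding A_def B_def by auto
      have d2: "Pair m ` A \<inter> (\<lambda>i. (i,m)) ` B = {}" unfolding A_def B_def by auto
      have cA: "card (Pair m ` A) = card A" by (rule card_image) (auto simp: inj_on_def)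
      have cB: "card ((\<lambda>i. (i,m)) ` B) = card B" by (rule card_image) (auto simp: inj_on_def)
      show ?thesis using d1 d2 cA cB fA fB by (simp add: card_Un_disjoint)
    qed
    then show "(\<Sum>x\<in>{x. x \<in> D \<and> ?phi x = c}. 1) = hook_length D c"
      using eq unfolding hook_length_def cm A_def B_def by simp
  qed
  finally show ?thesis by simp
qed
lemma two_sum_Icc: "2 * (\<Sum>a\<in>{1..h}. a) = h * (h + 1)" for h :: nat
  by (induction h) (auto simp: algebra_simps)

lemma upper_bound:
  fixes lam :: "nat set" and n :: nat
  assumes fin: "finite lam" and z: "0 \<notin> lam" and ne: "lam \<noteq> {}"
    and sum: "2 * \<Sum>lam = n * (n + 1)"
    and nref: "\<not> refinable lam"
    and cm: "card (missing_parts lam) = Max lam div 2"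
    and Lge: "Max lam \<ge> 2 * n - 4" and n7: "n \<ge> 7"
  shows "card lam = n - 2"
proof -
  define L where "L = Max lam"
  have LA: "L \<in> lam" using fin ne L_def by simp
  have le: "\<And>x. x \<in> lam \<Longrightarrow> x \<le> L" using fin L_def by simp
  have sub: "lam \<subseteq> {1..L}" using le z by (auto simp: Suc_le_eq intro: gr0I)
  have L1: "L \<ge> 1" using LA z by (cases L) auto
  have Mdef: "missing_parts lam = {1..L} - lam" unfolding missing_parts_def largest_part_def L_def ..
  have "card ({1..L} - lam) = L - card lam" using sub fin by (simp add: card_Diff_subset)
  then have t: "card lam = L - L div 2" using cm Mdef L_def card_mono[OF _ sub] by simp
  define lam' where "lam' = lam - {L}"
  define h where "h = (L - 1) div 2"
  have fin': "finite lam'" using fin lam'_def by simp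
  have cl': "card lam' = h" using t LA fin unfolding lam'_def h_def by simp
  define g where "g x = min x (L - x)" for x
  have cover: "{1..h} \<subseteq> g ` lam'"
  proof
    fix a assume a: "a \<in> {1..h}"
    then have a1: "1 \<le> a" and a2: "2 * a \<le> L - 1" unfolding h_def by auto
    show "a \<in> g ` lam'"
    proof (cases "a \<in> lam")
      case True
      then have "a \<in> lam'" using a2 L1 unfolding lam'_def by auto
      moreover have "g a = a" unfolding g_def using a2 by simp
      ultimately show ?thesis by force
    next
      case False
      show ?thesis
      proof (cases "L - a \<in> lam")
        case True
        then have "L - a \<in> lam'" using a1 L1 a2 unfolding lam'_def by auto
        moreover have "g (L - a) = a" unfolding g_def using a2 by simp
        ultimately show ?thesis by force
      next
        case False2: False
        have "a \<in> missing_parts lam" using False a1 a2 Mdef by auto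
        moreover have "L - a \<in> missing_parts lam" using False2 a1 a2 Mdef by auto
        moreover have "a \<noteq> L - a" using a1 a2 by arith
        moreover have "a + (L - a) \<in> lam" using LA a2 by simp
        ultimately have "refinable lam" unfolding refinable_def by blast
        then show ?thesis using nref by simp
      qed
    qed
  qed
  have cimg: "card (g ` lam') \<le> h" using card_image_le[OF fin'] cl' by simp
  have imgeq: "{1..h} = g ` lam'"
    by (rule card_seteq) (use fin' cover cimg in auto)
  have inj: "inj_on g lam'"
    by (rule eq_card_imp_inj_on[OF fin']) (use imgeq cl' in \<open>simp flip: imgeq\<close>)
  have sg: "2 * (\<Sum>x\<in>lam'. g x) = h * (h + 1)"
  proof -
    have "(\<Sum>x\<in>lam'. g x) = (\<Sum>a\<in>g ` lam'. a)" using sum.reindex[OF inj, of id] by simp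
    then show ?thesis using two_sum_Icc[of h] by (simp flip: imgeq)
  qed
  define E where "E = (\<Sum>x\<in>lam'. x - g x)"
  have "(\<Sum>x\<in>lam'. x) = (\<Sum>x\<in>lam'. g x + (x - g x))"
    by (rule sum.cong) (auto simp: g_def)
  then have s': "\<Sum>lam' = (\<Sum>x\<in>lam'. g x) + E" unfolding E_def by (simp add: sum.distrib)
  have sl: "\<Sum>lam = L + \<Sum>lam'" using LA fin unfolding lam'_def by (simp add: sum.remove)
  have key: "n * (n + 1) = 2 * L + h * (h + 1) + 2 * E" using sum sl s' sg by simp
  have trm: "x - g x = (if 2 * x > L then 2 * x - L else 0)" if "x \<in> lam'" for x
    using le[of x] that unfolding lam'_def g_def by auto
  have Ege: "E \<ge> x - g x" if "x \<in> lam'" for x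
    unfolding E_def by (rule member_le_sum[OF that _ fin']) auto
  obtain q where q: "n = q + 7" using n7 by (metis add.commute le_Suc_ex)
  have "L \<le> 2 * n - 4"
  proof (rule ccontr)
    assume "\<not> ?thesis"
    then consider "L = 2 * n - 3" | "L = 2 * n - 2" | "L \<ge> 2 * n - 1" by linarith
    then show False
    proof cases
      case 1
      then have hh: "h = q + 5" "L = 2 * q + 11" using q h_def by auto
      then have E2: "E = 2" using key q by (simp add: algebra_simps)
      have small: "x - g x \<le> (if x = q + 6 then 1 else 0)" if x: "x \<in> lam'" for x
      proof (cases "2 * x > L")
        case True
        then have tx: "x - g x = 2 * x - L" using trm x by simp
        have "x - g x \<le> 2" using Ege[OF x] E2 by simp
        then show ?thesis using tx hh True by auto
      next
        case False then show ?thesis using trm x by simp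
      qed
      have "E \<le> (\<Sum>x\<in>lam'. (if x = q + 6 then 1 else 0))"
        unfolding E_def by (rule sum_mono) (rule small)
      also have "\<dots> \<le> 1" using fin' by (simp add: sum.delta)
      finally show False using E2 by simp
    next
      case 2
      then have hh: "h = q + 5" "L = 2 * q + 12" using q h_def by auto
      then have E1: "E = 1" using key q by (simp add: algebra_simps)
      have "\<forall>x\<in>lam'. x - g x = 0"
      proof
        fix x assume x: "x \<in> lam'"
        show "x - g x = 0"
        proof (cases "2 * x > L")
          case True
          then have tx: "x - g x = 2 * x - L" using trm x by simp
          have "x - g x \<le> 1" using Ege[OF x] E1 by simp
          then show ?thesis using tx hh True by presburger
        next
          case False then show ?thesis using trm x by simp
        qed
      qed
      then have "E = 0" unfolding E_def by simp
      then show False using E1 by simp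
    next
      case 3
      then have "h \<ge> q + 6" using q h_def by auto
      then have "h * (h + 1) \<ge> (q + 6) * (q + 7)" by (intro mult_mono) auto
      then show False using key q 3 by (simp add: algebra_simps)
    qed
  qed
  then have "L = 2 * n - 4" using Lge L_def by simp
  then show ?thesis using t q by simp
qed

lemma witness:
  fixes q :: nat
  defines "W \<equiv> {1..q+4} \<union> {q+8, 2*q+10}"
  shows "W \<in> unrefinable_parts (triangular (q+7)) \<and> largest_part W = 2 * (q+7) - 4"
proof -
  have fW: "finite W" unfolding W_def by simp
  have mx: "Max W = 2*q+10"
    by (rule Max_eqI) (auto simp: W_def)
  have sW: "2 * \<Sum>W = (q+7) * (q+8)"
  proof -
    have "\<Sum>W = \<Sum>{1..q+4} + (q+8) + (2*q+10)" unfolding W_def by simp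
    then show ?thesis using two_sum_Icc[of "q+4"] by (simp add: algebra_simps)
  qed
  have tri: "triangular (q+7) = \<Sum>W"
  proof -
    have "(q+7)*(q+7+1) = 2*\<Sum>W" using sW by simp
    then show ?thesis unfolding triangular_def by simp
  qed
  have cW: "card W \<ge> 2"
  proof -
    have "{q+8, 2*q+10} \<subseteq> W" unfolding W_def by auto
    then have "card {q+8, 2*q+10} \<le> card W" using fW by (rule card_mono[rotated])
    then show ?thesis by simp
  qed
  have dp: "distinct_partition (triangular (q+7)) W"
    unfolding distinct_partition_def using fW cW tri by (auto simp: W_def)
  have nr: "\<not> refinable W"
  proof
    assume "refinable W"
    then obtain a b where a: "a \<in> missing_parts W" and b: "b \<in> missing_parts W" and ab: "a \<noteq> b"
      and s: "a + b \<in> W" unfolding refinable_def by blast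
    have "a \<ge> q + 5" "b \<ge> q + 5" using a b unfolding missing_parts_def largest_part_def W_def by auto
    moreover have "a + b \<le> 2*q+10" using s fW mx by (metis Max_ge)
    ultimately show False using ab by linarith
  qed
  show ?thesis using dp nr mx unfolding unrefinable_parts_def largest_part_def by auto
qed

lemma fin_unref: "finite (unrefinable_parts N)"
proof -
  have "unrefinable_parts N \<subseteq> Pow {1..N}"
  proof
    fix lam assume "lam \<in> unrefinable_parts N"
    then have d: "finite lam" "0 \<notin> lam" "\<Sum>lam = N"
      unfolding unrefinable_parts_def distinct_partition_def by auto
    have "x \<le> N" if "x \<in> lam" for x using member_le_sum[of x lam id] d that by auto
    then show "lam \<in> Pow {1..N}" using d(2) by (auto simp: Suc_le_eq intro: gr0I)
  qed
  then show ?thesis by (rule finite_subset) simp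
qed

theorem proposition3p9:
  fixes k n :: nat and lam :: "nat set"
  assumes "k \<ge> 4" and "n = 2 * k - 1"
    and "lam \<in> maximal_unrefinable_bar (triangular n)"
  shows "card (KN (S_of lam)) = 3 * n - 3
    \<and> (\<Sum>c\<in>main_diagonal (KN (S_of lam)). hook_length (KN (S_of lam)) c) = 3 * n - 3"
proof -
  have n7: "n \<ge> 7" using assms(1,2) by simp
  obtain q where q: "n = q + 7" using n7 by (metis add.commute le_Suc_ex)
  have lu: "lam \<in> unrefinable_parts (triangular n)"
    and cm: "card (missing_parts lam) = largest_part lam div 2"
    and lm: "largest_part lam = max_largest_part (triangular n)"
    using assms(3) unfolding maximal_unrefinable_bar_def maximal_unrefinable_def by auto
  have fin: "finite lam" and z: "0 \<notin> lam" and sl: "\<Sum>lam = triangular n" and c2: "card lam \<ge> 2"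
    and nr: "\<not> refinable lam"
    using lu unfolding unrefinable_parts_def distinct_partition_def by auto
  have ne: "lam \<noteq> {}" using c2 by auto
  have s2: "2 * \<Sum>lam = n * (n + 1)" using sl unfolding triangular_def by simp
  have "2 * n - 4 \<le> max_largest_part (triangular n)"
  proof -
    have "largest_part ({1..q+4} \<union> {q+8, 2*q+10}) \<in> largest_part ` unrefinable_parts (triangular n)"
      using witness[of q] q by (intro imageI) simp
    then have "largest_part ({1..q+4} \<union> {q+8, 2*q+10}) \<le> max_largest_part (triangular n)"
      unfolding max_largest_part_def using fin_unref by simp
    then show ?thesis using witness[of q] q by simp
  qed
  then have Lge: "Max lam \<ge> 2 * n - 4" using lm unfolding largest_part_def by simp
  have t: "card lam = n - 2"
    by (rule upper_bound[OF fin z ne s2 nr _ Lge]) (use cm q in \<open>auto simp: largest_part_def\<close>)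
  have KF: "finite (KN (S_of lam))" "\<And>i j. (i,j) \<in> KN (S_of lam) \<Longrightarrow> (min i j, min i j) \<in> KN (S_of lam)"
    "card (KN (S_of lam)) = (\<Sum>g\<in>lam. card {s. s \<notin> lam \<and> s < g})"
    using KN_facts[OF fin] by auto
  have cg: "card {s. s \<notin> lam \<and> s < g} = g - card {p\<in>lam. p < g}" for g
  proof -
    have "{s. s \<notin> lam \<and> s < g} = {..<g} - {p\<in>lam. p < g}" by auto
    moreover have "{p\<in>lam. p < g} \<subseteq> {..<g}" by auto
    ultimately show ?thesis by (simp add: card_Diff_subset)
  qed
  have cle: "card {p\<in>lam. p < g} \<le> g" for g
  proof -
    have "card {p\<in>lam. p < g} \<le> card {..<g}" by (rule card_mono) auto
    then show ?thesis by simp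
  qed
  have "card (KN (S_of lam)) = (\<Sum>g\<in>lam. g - card {p\<in>lam. p < g})" using KF(3) cg by simp
  also have "\<dots> = \<Sum>lam - (\<Sum>g\<in>lam. card {p\<in>lam. p < g})"
    using cle by (simp add: sum_subtractf_nat)
  finally have cK: "card (KN (S_of lam)) = \<Sum>lam - (\<Sum>g\<in>lam. card {p\<in>lam. p < g})" .
  have P: "2 * (\<Sum>g\<in>lam. card {p\<in>lam. p < g}) = (q + 5) * (q + 4)"
    using pairs_less_sum[OF fin] t q by (simp add: algebra_simps)
  have s2': "2 * \<Sum>lam = (q+7) * (q+8)" using s2 q by simp
  have c1: "card (KN (S_of lam)) = 3 * n - 3"
    using cK P s2' q by (simp add: algebra_simps)
  moreover have "(\<Sum>c\<in>main_diagonal (KN (S_of lam)). hook_length (KN (S_of lam)) c) = card (KN (S_of lam))"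
    using young_hook_sum[OF KF(1) KF(2)] by simp
  ultimately show ?thesis by simp
qed

end
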